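(* Let $\omega=e^{2\pi i/3}$, $\Delta=\mathrm{diag}(1,0,-1)$, and \[ g(\lambda)=\frac{i}{\sqrt3}\,\lambda^{\Delta/3}\begin{pmatrix}1&\omega&\omega^2\\1&1&1\\1&\omega^2&\omega\end{pmatrix}. \] Then $\det g(\lambda)=1$, and if $\Psi$ satisfies $\partial_\lambda\Psi=L(\lambda;t_5,t_2,x)\Psi$ (with $L$ as in the context) and we set $\Psi=g\Phi$ and $\lambda=\xi^3$, then $\Phi=\Phi(\xi;t_5,t_2,x)$ satisfies $\partial_\xi\Phi=\mathcal L(\xi;t_5,t_2,x)\Phi$, where \[ \mathcal L(\xi)=3\begin{pmatrix}1&0&0\\0&\omega&0\\0&0&\omega^2\end{pmatrix}\xi^6+\sum_{k=0}^4\mathcal L_k\xi^k+\frac1\xi\cdot\frac{i}{\sqrt3}\begin{pmatrix}0&-1&1\\1&0&-1\\-1&1&0\end{pmatrix} \] for some matrices $\mathcal L_k$ independent of $\xi$.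
   Context: $E_{ij}$ are $3\times3$ matrix units and $Q_U,Q_V,Q_W,P_U,P_V,P_W,t_5,t_2,x$ are parameters. $L(\lambda)=E_{13}\lambda^2+\begin{pmatrix}0&2t_5+\frac14Q_U&-Q_V\\1&0&2t_5+\frac14Q_U\\0&1&0\end{pmatrix}\lambda+L_0$, where $L_0$ has rows $(\tfrac18Q_U^2-P_W+\tfrac12P_V-\tfrac14t_5Q_U-\tfrac16t_5^2,L_{12},L_{13})$, $(\tfrac12Q_V-\tfrac14Q_W,2P_W-\tfrac14Q_U^2+\tfrac12t_5Q_U+\tfrac13t_5^2,L_{23})$, $(t_5-\tfrac12Q_U,\tfrac12Q_V+\tfrac14Q_W,\tfrac18Q_U^2-P_W-\tfrac12P_V-\tfrac14t_5Q_U-\tfrac16t_5^2)$, with $L_{12}=\tfrac5{16}Q_UQ_W-P_U+\tfrac14t_5Q_W-\tfrac38Q_UQ_V-\tfrac12t_5Q_V+t_2$, $L_{13}=\tfrac1{16}Q_W^2+\tfrac7{32}Q_U^3+\tfrac34Q_V^2-\tfrac32P_WQ_U+\tfrac5{16}t_5Q_U^2-2t_5P_W+\tfrac14t_5^2Q_U+x+\tfrac8{27}t_5^3$, $L_{23}=-\tfrac5{16}Q_UQ_W+P_U-\tfrac14t_5Q_W-\tfrac38Q_UQ_V-\tfrac12t_5Q_V+t_2$. $\lambda^{\Delta/3}=\exp(\frac\Delta3\log\lambda)$. *)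

theory Defs
  imports "HOL-Analysis.Analysis"
begin

text \<open>Scalar multiple of a complex matrix (note: on vec types, * is componentwise,
  so the matrix product is **).\<close>
definition msc :: "complex \<Rightarrow> complex^'n^'m \<Rightarrow> complex^'n^'m" where
  "msc c A = (\<chi> i j. c * A $ i $ j)"

definition omega :: complex where
  "omega = exp (2 * of_real pi * \<i> / 3)"

definition Lmat ::
  "complex \<Rightarrow> complex \<Rightarrow> complex \<Rightarrow> complex \<Rightarrow> complex \<Rightarrow> complex \<Rightarrow>
   complex \<Rightarrow> complex \<Rightarrow> complex \<Rightarrow> complex \<Rightarrow> complex^3^3" where
  "Lmat QU QV QW PU PV PW t5 t2 x lam =
    (let L12 = 5/16*QU*QW - PU + 1/4*t5*QW - 3/8*QU*QV - 1/2*t5*QV + t2;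
         L13 = 1/16*QW^2 + 7/32*QU^3 + 3/4*QV^2 - 3/2*PW*QU + 5/16*t5*QU^2
               - 2*t5*PW + 1/4*t5^2*QU + x + 8/27*t5^3;
         L23 = -5/16*QU*QW + PU - 1/4*t5*QW - 3/8*QU*QV - 1/2*t5*QV + t2;
         E13 = vector [vector [0,0,1], vector [0,0,0], vector [0,0,0]] :: complex^3^3;
         A1 = vector [vector [0, 2*t5 + 1/4*QU, -QV],
                      vector [1, 0, 2*t5 + 1/4*QU],
                      vector [0, 1, 0]] :: complex^3^3;
         L0 = vector [vector [1/8*QU^2 - PW + 1/2*PV - 1/4*t5*QU - 1/6*t5^2, L12, L13],
                      vector [1/2*QV - 1/4*QW, 2*PW - 1/4*QU^2 + 1/2*t5*QU + 1/3*t5^2, L23],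
                      vector [t5 - 1/2*QU, 1/2*QV + 1/4*QW,
                              1/8*QU^2 - PW - 1/2*PV - 1/4*t5*QU - 1/6*t5^2]] :: complex^3^3
     in msc (lam^2) E13 + msc lam A1 + L0)"

text \<open>lambda^(Delta/3) = exp((Delta/3) log lambda) with Delta = diag(1,0,-1) and the
  principal logarithm Ln; for a diagonal matrix this is the diagonal matrix of exponentials.\<close>
definition lamDelta3 :: "complex \<Rightarrow> complex^3^3" where
  "lamDelta3 lam = vector [vector [exp (Ln lam / 3), 0, 0],
                           vector [0, 1, 0],
                           vector [0, 0, exp (- Ln lam / 3)]]"

definition gmat :: "complex \<Rightarrow> complex^3^3" where
  "gmat lam = msc (\<i> / of_real (sqrt 3))
     (lamDelta3 lam ** vector [vector [1, omega, omega^2],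
                               vector [1, 1, 1],
                               vector [1, omega^2, omega]])"

definition calL :: "complex^3^3 \<Rightarrow> complex^3^3 \<Rightarrow> complex^3^3 \<Rightarrow> complex^3^3 \<Rightarrow>
                    complex^3^3 \<Rightarrow> complex \<Rightarrow> complex^3^3" where
  "calL L0 L1 L2 L3 L4 xi =
     msc (3 * xi^6) (vector [vector [1,0,0], vector [0,omega,0], vector [0,0,omega^2]])
     + L0 + msc xi L1 + msc (xi^2) L2 + msc (xi^3) L3 + msc (xi^4) L4
     + msc (1/xi * (\<i> / of_real (sqrt 3)))
         (vector [vector [0,-1,1], vector [1,0,-1], vector [-1,1,0]])"

text \<open>The sector of the xi-plane on which lambda^(1/3) = exp(Ln(xi^3)/3) = xi,
  i.e. on which lambda^(Delta/3) = diag(xi,1,1/xi) for lambda = xi^3.\<close>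
definition sector :: "complex set" where
  "sector = {xi. xi \<noteq> 0 \<and> - (pi/3) < Arg xi \<and> Arg xi < pi/3}"

end

theory Submission imports Defs begin


lemma omega_eq: "omega = - 1/2 + \<i> * of_real (sqrt 3) / 2"
proof -
  have "omega = exp (\<i> * of_real (2*pi/3))" unfolding omega_def by (simp add: field_simps)
  also have "\<dots> = cis (2*pi/3)" by (simp add: cis_conv_exp)
  also have "\<dots> = - 1/2 + \<i> * of_real (sqrt 3) / 2"
    by (simp add: cis.ctr cos_120 sin_120 complex_eq_iff)
  finally show ?thesis .
qed

lemma sq3: "(of_real (sqrt 3) :: complex)^2 = 3"
  by (metis of_real_numeral of_real_power real_sqrt_pow2 zero_le_numeral)

lemma omega_sq: "omega^2 = - 1 - omega"
  unfolding omega_eq by (simp add: power2_eq_square field_simps sq3[unfolded power2_eq_square])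

lemma c_eq: "\<i> / of_real (sqrt 3) = (2 * omega+1)/3"
proof -
  have ne: "(of_real (sqrt 3) :: complex) \<noteq> 0" by simp
  show ?thesis unfolding omega_eq using ne sq3
    by (simp add: field_simps power2_eq_square)
qed

lemma det_g: "det (gmat lam) = 1"
proof -
  have e: "exp (Ln lam / 3) * exp (- (Ln lam / 3)) = 1" by (simp add: exp_minus)
  show ?thesis
  unfolding gmat_def lamDelta3_def msc_def c_eq
  apply (simp add: det_3 matrix_matrix_mult_def sum_3)
  using e omega_sq by algebra
qed

definition Mm :: "complex^3^3" where
  "Mm = vector [vector [1, omega, omega^2], vector [1,1,1], vector [1, omega^2, omega]]"
definition Ms :: "complex^3^3" where
  "Ms = vector [vector [1,1,1], vector [omega^2, 1, omega], vector [omega, 1, omega^2]]"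
definition kc :: complex where "kc = - (2 * omega + 1) / 3"
definition Ginv :: "complex \<Rightarrow> complex^3^3" where
  "Ginv z = msc kc (Ms ** vector [vector [1/z,0,0], vector [0,1,0], vector [0,0,z]])"
definition Gd :: "complex \<Rightarrow> complex^3^3" where
  "Gd z = msc kc (Ms ** vector [vector [- 1/z^2,0,0], vector [0,0,0], vector [0,0,1]])"
definition E13 :: "complex^3^3" where
  "E13 = vector [vector [0,0,1], vector [0,0,0], vector [0,0,0]]"
definition A1m :: "complex \<Rightarrow> complex \<Rightarrow> complex^3^3" where
  "A1m a b = vector [vector [0,a,b], vector [1,0,a], vector [0,1,0]]"
definition LLk :: "nat \<Rightarrow> complex \<Rightarrow> complex \<Rightarrow> complex^3^3 \<Rightarrow> complex^3^3" where
  "LLk k a b B = Ms ** (if k = 0 then vector [vector [0,0,B$1$3], vector [0,0,0], vector [0,0,0]]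
     else if k = 1 then vector [vector [0,B$1$2,0], vector [0,0,B$2$3], vector [0,0,0]]
     else if k = 2 then vector [vector [B$1$1,0,0], vector [0,B$2$2,0], vector [0,0,B$3$3]]
     else if k = 3 then vector [vector [0,0,b], vector [B$2$1,0,0], vector [0,B$3$2,0]]
     else vector [vector [0,a,0], vector [0,0,a], vector [B$3$1,0,0]]) ** Mm"

lemma key_gen:
  assumes z: "z \<noteq> 0"
  shows "Gd z + msc (3 * z^2) (Ginv z ** (msc ((z^3)^2) E13 + msc (z^3) (A1m a b) + B))
     = calL (LLk 0 a b B) (LLk 1 a b B) (LLk 2 a b B) (LLk 3 a b B) (LLk 4 a b B) z ** Ginv z"
  unfolding vec_eq_iff forall_3
  apply (simp add: Gd_def Ginv_def calL_def LLk_def msc_def Mm_def Ms_def E13_def A1m_def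
     matrix_matrix_mult_def sum_3 c_eq kc_def)
  apply (simp add: field_simps z)
  using omega_sq by algebra+


lemma sector_exp:
  assumes "z \<in> sector"
  shows "exp (Ln (z^3) / 3) = z" "exp (- Ln (z^3) / 3) = 1 / z" "exp (- (Ln (z^3) / 3)) = 1 / z"
proof -
  have z: "z \<noteq> 0" and a: "- (pi/3) < Arg z" "Arg z < pi/3" using assms by (auto simp: sector_def)
  have im: "Im (Ln z) = Arg z" using Arg_eq_Im_Ln[OF z] by simp
  have "exp (3 * Ln z) = exp (Ln z)^3" by (metis exp_of_nat_mult of_nat_numeral)
  then have "z^3 = exp (3 * Ln z)" using z by simp
  moreover have "Ln (exp (3 * Ln z)) = 3 * Ln z"
    by (rule Ln_exp) (use a im in auto)
  ultimately have L: "Ln (z^3) = 3 * Ln z" by simp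
  show "exp (Ln (z^3) / 3) = z" using z by (simp add: L)
  show "exp (- (Ln (z^3) / 3)) = 1 / z" using z by (simp add: L exp_minus inverse_eq_divide)
  then show "exp (- Ln (z^3) / 3) = 1 / z" by (metis minus_divide_left)
qed

lemma gmat_sector:
  assumes "z \<in> sector"
  shows "Ginv z ** gmat (z^3) = mat 1"
proof -
  have z: "z \<noteq> 0" using assms by (auto simp: sector_def)
  show ?thesis
  unfolding vec_eq_iff forall_3 gmat_def lamDelta3_def sector_exp[OF assms] minus_divide_left[symmetric]
  apply (simp add: sector_exp[OF assms] Ginv_def msc_def Mm_def Ms_def kc_def mat_def
     matrix_matrix_mult_def sum_3 c_eq)
  apply (simp add: field_simps z)
  apply (intro conjI)
  using omega_sq by algebra+
qed

lemma sector_ev: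
  assumes "xi \<in> sector" "open U" "xi^3 \<in> U"
  shows "eventually (\<lambda>z. z \<in> sector \<and> z^3 \<in> U) (nhds xi)"
proof -
  have z: "xi \<noteq> 0" and a: "- (pi/3) < Arg xi" "Arg xi < pi/3" using assms by (auto simp: sector_def)
  have "xi \<notin> \<real>\<^sub>\<le>\<^sub>0"
  proof
    assume "xi \<in> \<real>\<^sub>\<le>\<^sub>0"
    then have "Re xi < 0 \<and> Im xi = 0" using z complex_nonpos_Reals_iff
      by (metis complex_eq_iff less_eq_real_def zero_complex.simps)
    then have "Arg xi = pi" using Arg_eq_pi by blast
    then show False using a pi_gt_zero by linarith
  qed
  then have "eventually (\<lambda>z. Arg z \<in> {-(pi/3)<..<pi/3}) (at xi)"
    by (intro topological_tendstoD[OF continuous_at_Arg[unfolded continuous_at]]) (use a in auto)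
  moreover have "eventually (\<lambda>z. z \<noteq> 0) (at xi)"
    using t1_space_nhds[OF z] eventually_nhds_conv_at by blast
  moreover have "eventually (\<lambda>z. z^3 \<in> U) (at xi)"
  proof -
    have "isCont (\<lambda>z. z^3) xi" by (intro continuous_intros)
    then show ?thesis using topological_tendstoD assms(2,3) unfolding continuous_at by fastforce
  qed
  ultimately have "eventually (\<lambda>z. z \<in> sector \<and> z^3 \<in> U) (at xi)"
    by eventually_elim (auto simp: sector_def)
  then show ?thesis using assms by (simp add: eventually_nhds_conv_at)
qed

lemma Lmat_dec:
  "Lmat QU QV QW PU PV PW t5 t2 x lam = msc (lam^2) E13 + msc lam (A1m (2*t5 + 1/4*QU) (-QV))
     + Lmat QU QV QW PU PV PW t5 t2 x 0"
  by (simp add: Lmat_def Let_def msc_def E13_def A1m_def vec_eq_iff forall_3)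

lemma Ginv_deriv:
  assumes "xi \<noteq> 0"
  shows "((\<lambda>z. Ginv z $ i $ k) has_field_derivative Gd xi $ i $ k) (at xi)"
proof -
  have "i = 1 \<or> i = 2 \<or> i = 3" "k = 1 \<or> k = 2 \<or> k = 3" using exhaust_3 by auto
  then show ?thesis using assms
    by (auto simp: Ginv_def Gd_def msc_def Ms_def matrix_matrix_mult_def sum_3
        intro!: derivative_eq_intros simp: field_simps power2_eq_square)
qed

lemma combine:
  fixes P :: "complex^'k^3"
  shows "(\<Sum>k\<in>UNIV. Gd' $ i $ k * P $ k $ j + G $ i $ k * (c * (L ** P) $ k $ j))
       = ((Gd' + msc c (G ** L)) ** P) $ i $ j"
  by (simp add: matrix_matrix_mult_def msc_def sum_3 algebra_simps)


theorem mainTheorem7: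
  fixes QU QV QW PU PV PW t5 t2 x :: complex
  shows "(\<forall>lam. lam \<noteq> 0 \<longrightarrow> det (gmat lam) = 1) \<and>
    (\<exists>L0 L1 L2 L3 L4 :: complex^3^3.
      \<forall>(U :: complex set) (Psi :: complex \<Rightarrow> complex^'k^3) (Phi :: complex \<Rightarrow> complex^'k^3) xi.
        open U \<and>
        (\<forall>lam\<in>U. \<forall>i j. ((\<lambda>z. Psi z $ i $ j) has_field_derivative
                   (Lmat QU QV QW PU PV PW t5 t2 x lam ** Psi lam) $ i $ j) (at lam)) \<and>
        (\<forall>zeta\<in>sector. zeta^3 \<in> U \<longrightarrow> Psi (zeta^3) = gmat (zeta^3) ** Phi zeta) \<and>
        xi \<in> sector \<and> xi^3 \<in> U
        \<longrightarrow> (\<forall>i j. ((\<lambda>z. Phi z $ i $ j) has_field_derivative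
                   (calL L0 L1 L2 L3 L4 xi ** Phi xi) $ i $ j) (at xi)))"
proof
  show "\<forall>lam. lam \<noteq> 0 \<longrightarrow> det (gmat lam) = 1" using det_g by blast
next
  define a where "a = 2*t5 + 1/4*QU"
  define b where "b = - QV"
  define B where "B = Lmat QU QV QW PU PV PW t5 t2 x 0"
  let ?L = "Lmat QU QV QW PU PV PW t5 t2 x"
  show "\<exists>L0 L1 L2 L3 L4 :: complex^3^3.
      \<forall>(U :: complex set) (Psi :: complex \<Rightarrow> complex^'k^3) (Phi :: complex \<Rightarrow> complex^'k^3) xi.
        open U \<and>
        (\<forall>lam\<in>U. \<forall>i j. ((\<lambda>z. Psi z $ i $ j) has_field_derivative
                   (?L lam ** Psi lam) $ i $ j) (at lam)) \<and>
        (\<forall>zeta\<in>sector. zeta^3 \<in> U \<longrightarrow> Psi (zeta^3) = gmat (zeta^3) ** Phi zeta) \<and>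
        xi \<in> sector \<and> xi^3 \<in> U
        \<longrightarrow> (\<forall>i j. ((\<lambda>z. Phi z $ i $ j) has_field_derivative
                   (calL L0 L1 L2 L3 L4 xi ** Phi xi) $ i $ j) (at xi))"
  proof (intro exI allI impI)
    fix U :: "complex set" and Psi Phi :: "complex \<Rightarrow> complex^'k^3" and xi :: complex
    assume H: "open U \<and>
        (\<forall>lam\<in>U. \<forall>i j. ((\<lambda>z. Psi z $ i $ j) has_field_derivative
                   (?L lam ** Psi lam) $ i $ j) (at lam)) \<and>
        (\<forall>zeta\<in>sector. zeta^3 \<in> U \<longrightarrow> Psi (zeta^3) = gmat (zeta^3) ** Phi zeta) \<and>
        xi \<in> sector \<and> xi^3 \<in> U"
    then have U: "open U" and dPsi: "\<And>i j. ((\<lambda>z. Psi z $ i $ j) has_field_derivative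
                   (?L (xi^3) ** Psi (xi^3)) $ i $ j) (at (xi^3))"
      and rel: "\<And>zeta. zeta \<in> sector \<Longrightarrow> zeta^3 \<in> U \<Longrightarrow> Psi (zeta^3) = gmat (zeta^3) ** Phi zeta"
      and xs: "xi \<in> sector" and xU: "xi^3 \<in> U" by auto
    have xi0: "xi \<noteq> 0" using xs by (simp add: sector_def)
    have PhiG: "Phi z = Ginv z ** Psi (z^3)" if "z \<in> sector" "z^3 \<in> U" for z
      using rel[OF that] gmat_sector[OF that(1)] by (simp add: matrix_mul_assoc)
    have ev: "eventually (\<lambda>z. Phi z = Ginv z ** Psi (z^3)) (nhds xi)"
      using sector_ev[OF xs U xU] by eventually_elim (use PhiG in blast)
    have Ldec: "?L (xi^3) = msc ((xi^3)^2) E13 + msc (xi^3) (A1m a b) + B"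
      unfolding a_def b_def B_def by (rule Lmat_dec)
    have key: "Gd xi + msc (3 * xi^2) (Ginv xi ** ?L (xi^3))
        = calL (LLk 0 a b B) (LLk 1 a b B) (LLk 2 a b B) (LLk 3 a b B) (LLk 4 a b B) xi ** Ginv xi"
      unfolding Ldec by (rule key_gen[OF xi0])
    have d3: "((\<lambda>z. z^3) has_field_derivative 3 * xi^2) (at xi)"
      by (rule derivative_eq_intros refl | simp)+
    fix i j
      have fun_eq: "(\<lambda>z. (Ginv z ** Psi (z^3)) $ i $ j) = (\<lambda>z. \<Sum>k\<in>UNIV. Ginv z $ i $ k * Psi (z^3) $ k $ j)"
        by (simp add: matrix_matrix_mult_def)
      have dk: "((\<lambda>z. Psi (z^3) $ k $ j) has_field_derivative
                 (?L (xi^3) ** Psi (xi^3)) $ k $ j * (3 * xi^2)) (at xi)" for k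
        using DERIV_chain2[OF dPsi d3] by simp
      have "((\<lambda>z. \<Sum>k\<in>UNIV. Ginv z $ i $ k * Psi (z^3) $ k $ j) has_field_derivative
          (\<Sum>k\<in>UNIV. Gd xi $ i $ k * Psi (xi^3) $ k $ j + Ginv xi $ i $ k * ((3 * xi^2) * (?L (xi^3) ** Psi (xi^3)) $ k $ j))) (at xi)"
        apply (rule DERIV_sum)
        apply (rule DERIV_mult'[OF Ginv_deriv[OF xi0] dk, THEN DERIV_cong])
        by (simp add: algebra_simps)
      also have "(\<Sum>k\<in>UNIV. Gd xi $ i $ k * Psi (xi^3) $ k $ j + Ginv xi $ i $ k * ((3 * xi^2) * (?L (xi^3) ** Psi (xi^3)) $ k $ j))
          = ((Gd xi + msc (3 * xi^2) (Ginv xi ** ?L (xi^3))) ** Psi (xi^3)) $ i $ j"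
        by (rule combine)
      also have "\<dots> = (calL (LLk 0 a b B) (LLk 1 a b B) (LLk 2 a b B) (LLk 3 a b B) (LLk 4 a b B) xi ** Phi xi) $ i $ j"
        unfolding key PhiG[OF xs xU] by (simp add: matrix_mul_assoc)
      finally have D: "((\<lambda>z. (Ginv z ** Psi (z^3)) $ i $ j) has_field_derivative
          (calL (LLk 0 a b B) (LLk 1 a b B) (LLk 2 a b B) (LLk 3 a b B) (LLk 4 a b B) xi ** Phi xi) $ i $ j) (at xi)"
        unfolding fun_eq .
      have ev2: "eventually (\<lambda>z. Phi z $ i $ j = (Ginv z ** Psi (z^3)) $ i $ j) (nhds xi)"
        using ev by eventually_elim simp
      show "((\<lambda>z. Phi z $ i $ j) has_field_derivative
          (calL (LLk 0 a b B) (LLk 1 a b B) (LLk 2 a b B) (LLk 3 a b B) (LLk 4 a b B) xi ** Phi xi) $ i $ j) (at xi)"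
        using DERIV_cong_ev[OF refl ev2 refl] D by blast
  qed
qed

end
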